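(* Let $(M,d)$ be a metric space, $\mathsf{P}\subseteq M$ a set of $n$ points, $1\le\ell\le k\le n$ integers and $m=\lfloor k/\ell\rfloor$. Let $r_{\mathrm{cen}}=\min_{S\subseteq\mathsf{P},|S|=m}\max_{p\in\mathsf{P}} d_S(p,1)$ and $r_{\mathrm{opt}}=\min_{C'\subseteq\mathsf{P},|C'|=k}\max_{p\in\mathsf{P}} d_{C'}(p,\ell)$. Then $r_{\mathrm{cen}}\le 2r_{\mathrm{opt}}$.
   Context: For a finite set $S\subseteq M$, a point $p\in M$ and an integer $1\le i\le|S|$, $d_S(p,i)$ denotes the radius of the smallest closed ball centered at $p$ containing at least $i$ points of $S$. *)

theory Defs
  imports "HOL-Analysis.Analysis"
begin

definition kdist :: "'a::metric_space set \<Rightarrow> 'a \<Rightarrow> nat \<Rightarrow> real" where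
  "kdist S p i = Inf {r. 0 \<le> r \<and> i \<le> card {q \<in> S. dist p q \<le> r}}"

end

theory Submission
  imports Defs
begin

lemma kdist_attained:
  fixes C :: "'a::metric_space set"
  assumes fin: "finite C" and lc: "l \<le> card C"
  shows "0 \<le> kdist C p l \<and> l \<le> card {q \<in> C. dist p q \<le> kdist C p l}"
proof -
  define A where "A = {r. 0 \<le> r \<and> l \<le> card {q \<in> C. dist p q \<le> r}}"
  define D where "D = insert 0 ((\<lambda>q. dist p q) ` C)"
  have finD: "finite D" using fin by (simp add: D_def)
  have key: "\<exists>r0\<in>A \<inter> D. r0 \<le> r" if "r \<in> A" for r
  proof -
    define r0 where "r0 = Max {d\<in>D. d \<le> r}"
    have ne: "{d\<in>D. d \<le> r} \<noteq> {}" using that by (auto simp: D_def A_def)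
    have fin2: "finite {d\<in>D. d \<le> r}" using finD by simp
    have r0in: "r0 \<in> {d\<in>D. d \<le> r}" unfolding r0_def using Max_in[OF fin2 ne] .
    have "{q \<in> C. dist p q \<le> r} = {q \<in> C. dist p q \<le> r0}"
    proof
      show "{q \<in> C. dist p q \<le> r} \<subseteq> {q \<in> C. dist p q \<le> r0}"
      proof
        fix q assume q: "q \<in> {q \<in> C. dist p q \<le> r}"
        then have "dist p q \<in> {d\<in>D. d \<le> r}" by (auto simp: D_def)
        then have "dist p q \<le> r0" unfolding r0_def using Max_ge[OF fin2] by blast
        then show "q \<in> {q \<in> C. dist p q \<le> r0}" using q by auto
      qed
    next
      show "{q \<in> C. dist p q \<le> r0} \<subseteq> {q \<in> C. dist p q \<le> r}" using r0in by auto
    qed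
    moreover have "0 \<le> r0" using r0in by (auto simp: D_def)
    ultimately have "r0 \<in> A" using that by (auto simp: A_def)
    then show ?thesis using r0in by auto
  qed
  define rM where "rM = Max D"
  have "rM \<in> A"
  proof -
    have "{q \<in> C. dist p q \<le> rM} = C" using finD by (auto simp: rM_def D_def)
    moreover have "0 \<le> rM" using finD by (auto simp: rM_def D_def)
    ultimately show ?thesis using lc by (auto simp: A_def)
  qed
  then have neA: "A \<inter> D \<noteq> {}" using key by blast
  have finAD: "finite (A \<inter> D)" using finD by simp
  have bA: "bdd_below A" by (auto simp: A_def bdd_below_def)
  have bAD: "bdd_below (A \<inter> D)" using bA by (meson bdd_below_mono inf_le1)
  have "Inf A = Inf (A \<inter> D)"
  proof (rule antisym)
    show "Inf A \<le> Inf (A \<inter> D)" using neA bA by (intro cInf_superset_mono) auto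
    show "Inf (A \<inter> D) \<le> Inf A"
    proof (rule cInf_mono)
      show "A \<noteq> {}" using neA by auto
      show "bdd_below (A \<inter> D)" by fact
      fix b assume "b \<in> A" then show "\<exists>a\<in>A \<inter> D. a \<le> b" using key by blast
    qed
  qed
  also have "\<dots> = Min (A \<inter> D)" using finAD neA by (simp add: cInf_eq_Min)
  finally have "kdist C p l \<in> A" using Min_in[OF finAD neA] by (simp add: kdist_def A_def[symmetric])
  then show ?thesis by (simp add: A_def)
qed

theorem mainTheorem7:
  fixes P :: "'a::metric_space set" and n k l m :: nat
  assumes "finite P" and "card P = n"
    and "1 \<le> l" and "l \<le> k" and "k \<le> n"
    and "m = k div l"
  shows "Min {Max ((\<lambda>p. kdist S p 1) ` P) | S. S \<subseteq> P \<and> card S = m}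
         \<le> 2 * Min {Max ((\<lambda>p. kdist C p l) ` P) | C. C \<subseteq> P \<and> card C = k}"
proof -
  have finP: "finite P" by fact
  have Pne: "P \<noteq> {}" using assms by auto
  define RS where "RS = {Max ((\<lambda>p. kdist C p l) ` P) | C. C \<subseteq> P \<and> card C = k}"
  have finRS: "finite RS" unfolding RS_def using finP by simp
  obtain C0 where "C0 \<subseteq> P" "card C0 = k" using obtain_subset_with_card_n assms by metis
  then have neRS: "RS \<noteq> {}" unfolding RS_def by blast
  obtain C where CP: "C \<subseteq> P" and cC: "card C = k" and RC: "Min RS = Max ((\<lambda>p. kdist C p l) ` P)"
    using Min_in[OF finRS neRS] unfolding RS_def by auto
  define r where "r = Min RS"
  have finC: "finite C" using CP finP finite_subset by blast
  have cov: "l \<le> card {q \<in> C. dist p q \<le> r}" and r0: "0 \<le> r" if "p \<in> P" for p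
  proof -
    have le: "kdist C p l \<le> r" unfolding r_def RC using that finP by auto
    have at: "0 \<le> kdist C p l \<and> l \<le> card {q \<in> C. dist p q \<le> kdist C p l}"
      using kdist_attained[OF finC] cC assms by auto
    have "card {q \<in> C. dist p q \<le> kdist C p l} \<le> card {q \<in> C. dist p q \<le> r}"
      using le finC by (intro card_mono) auto
    then show "l \<le> card {q \<in> C. dist p q \<le> r}" using at by linarith
    show "0 \<le> r" using at le by linarith
  qed
  define F where "F = {S. S \<subseteq> P \<and> (\<forall>a\<in>S. \<forall>b\<in>S. a \<noteq> b \<longrightarrow> 2 * r < dist a b)}"
  have finF: "finite F" unfolding F_def using finP by simp
  have "{} \<in> F" unfolding F_def by auto
  then have neF: "card ` F \<noteq> {}" by auto
  obtain S' where S'F: "S' \<in> F" and S'max: "card S' = Max (card ` F)"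
    using Max_in[OF _ neF] finF by auto
  have S'P: "S' \<subseteq> P" using S'F by (auto simp: F_def)
  have finS': "finite S'" using S'P finP finite_subset by blast
  have near: "\<exists>s\<in>S'. dist p s \<le> 2 * r" if "p \<in> P" for p
  proof (rule ccontr)
    assume "\<not> ?thesis"
    then have far: "\<forall>s\<in>S'. 2 * r < dist p s" by auto
    have pn: "p \<notin> S'" using far r0[OF that] by force
    have "insert p S' \<in> F" using S'F far that by (auto simp: F_def dist_commute)
    then have "card (insert p S') \<le> card S'" using S'max finF by simp
    then show False using pn finS' by simp
  qed
  define B where "B = (\<lambda>s. {q \<in> C. dist s q \<le> r})"
  have disj: "disjoint_family_on B S'"
    unfolding disjoint_family_on_def
  proof (intro ballI impI)
    fix a b assume ab: "a \<in> S'" "b \<in> S'" "a \<noteq> b"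
    show "B a \<inter> B b = {}"
    proof (rule ccontr)
      assume "B a \<inter> B b \<noteq> {}"
      then obtain q where "dist a q \<le> r" "dist b q \<le> r" unfolding B_def by auto
      then have "dist a b \<le> 2 * r" using dist_triangle[of a b q] by (simp add: dist_commute)
      then show False using ab S'F unfolding F_def by force
    qed
  qed
  have "card S' * l = (\<Sum>s\<in>S'. l)" by simp
  also have "\<dots> \<le> (\<Sum>s\<in>S'. card (B s))"
    using cov S'P unfolding B_def by (intro sum_mono) auto
  also have "\<dots> = card (\<Union>s\<in>S'. B s)"
    using card_UN_disjoint'[OF disj _ finS'] finC unfolding B_def by simp
  also have "\<dots> \<le> card C" using finC by (intro card_mono) (auto simp: B_def)
  finally have "card S' * l \<le> k" using cC by simp
  then have cS'm: "card S' \<le> m" using assms by (simp add: less_eq_div_iff_mult_less_eq)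
  have "m \<le> k" using assms by simp
  have "m - card S' \<le> card (P - S')" using card_Diff_subset[OF finS' S'P] assms(2,5) \<open>m \<le> k\<close> by linarith
  then obtain T where TP: "T \<subseteq> P - S'" and cT: "card T = m - card S'"
    using obtain_subset_with_card_n by metis
  define S where "S = S' \<union> T"
  have finT: "finite T" using TP finP finite_subset by blast
  have SP: "S \<subseteq> P" using S'P TP by (auto simp: S_def)
  have cS: "card S = m" unfolding S_def using card_Un_disjoint[OF finS' finT] TP cT cS'm by auto
  have finS: "finite S" using finS' finT by (simp add: S_def)
  have kd: "kdist S p 1 \<le> 2 * r" if pP: "p \<in> P" for p
  proof -
    obtain s where s: "s \<in> S'" "dist p s \<le> 2 * r" using near pP by blast
    have "{q \<in> S. dist p q \<le> 2 * r} \<noteq> {}" using s by (auto simp: S_def)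
    then have "1 \<le> card {q \<in> S. dist p q \<le> 2 * r}" using finS
      by (simp add: Suc_le_eq card_gt_0_iff)
    then have "2 * r \<in> {r. 0 \<le> r \<and> 1 \<le> card {q \<in> S. dist p q \<le> r}}" using r0[OF pP] by simp
    then show ?thesis unfolding kdist_def
      by (intro cInf_lower) (auto simp: bdd_below_def)
  qed
  have "Max ((\<lambda>p. kdist S p 1) ` P) \<le> 2 * r" using kd finP Pne by auto
  moreover have "Min {Max ((\<lambda>p. kdist S p 1) ` P) | S. S \<subseteq> P \<and> card S = m}
     \<le> Max ((\<lambda>p. kdist S p 1) ` P)"
    using SP cS finP by (intro Min_le) auto
  ultimately show ?thesis unfolding r_def RS_def by linarith
qed

end
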